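(* Let $X$ be any real random variable, $\mathsf{snr}>0$, $N\sim\mathcal N(0,1)$ independent of $X$, $Y=\sqrt{\mathsf{snr}}X+N$, and $M_i=\mathbb{E}\big[(X-\mathbb{E}[X\mid Y])^i\mid Y\big]$ for $i=1,2,\dots$. Then for any $k\ge1$ and positive integers $i_1,\dots,i_k,n_1,\dots,n_k$, $$\mathbb{E}\Big[\prod_{j=1}^k|M_{i_j}|^{n_j}\Big]\le\mathsf{snr}^{-n/2}\,2^n\sqrt{n!},\qquad n=\sum_{j=1}^k i_jn_j.$$ *)

theory Defs
  imports "HOL-Probability.Probability"
begin

definition gen_sigma :: "'a measure \<Rightarrow> ('a \<Rightarrow> real) \<Rightarrow> 'a measure" where
  "gen_sigma M Y = vimage_algebra (space M) Y borel"

definition cond_moment :: "'a measure \<Rightarrow> ('a \<Rightarrow> real) \<Rightarrow> ('a \<Rightarrow> real) \<Rightarrow> nat \<Rightarrow> 'a \<Rightarrow> real" where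
  "cond_moment M X Y i =
     real_cond_exp M (gen_sigma M Y)
       (\<lambda>\<omega>. (X \<omega> - real_cond_exp M (gen_sigma M Y) X \<omega>) ^ i)"

end

theory Submission
  imports Defs
begin

lemma fact_even_bound: "fact (2*k) \<le> (4::real)^k * (fact k)^2"
proof (induction k)
  case 0 then show ?case by simp
next
  case (Suc k)
  have e: "(fact (2*Suc k)::real) = (2*real k+2)*(2*real k+1)*fact (2*k)"
    by (simp add: algebra_simps)
  have "(2*real k+2)*(2*real k+1) \<le> 4 * (real k + 1)^2"
    by (simp add: power2_eq_square algebra_simps)
  then have "(2*real k+2)*(2*real k+1)*fact (2*k) \<le> 4 * (real k + 1)^2 * (4^k * (fact k)^2)"
    using Suc by (rule mult_mono) auto
  also have "\<dots> = 4^Suc k * (fact (Suc k))^2"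
  proof -
    have "(fact (Suc k)::real)^2 = (real k+1)^2 * (fact k)^2"
      by (simp add: power2_eq_square algebra_simps)
    then show ?thesis by (simp only: power_Suc) (simp add: algebra_simps)
  qed
  finally show ?case by (simp only: e)
qed

lemma fact_odd_bound: "(4::real)^k * (fact k)^2 \<le> fact (2*k+1)"
proof (induction k)
  case 0 then show ?case by simp
next
  case (Suc k)
  have e: "(fact (2*Suc k+1)::real) = (2*real k+3)*(2*real k+2)*fact (2*k+1)"
    by (simp add: algebra_simps)
  have "4 * (real k + 1)^2 \<le> (2*real k+3)*(2*real k+2)"
    by (simp add: power2_eq_square algebra_simps)
  then have "4 * (real k + 1)^2 * (4^k * (fact k)^2) \<le> (2*real k+3)*(2*real k+2)*fact (2*k+1)"
    using Suc by (rule mult_mono) auto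
  moreover have "4 * (real k + 1)^2 * (4^k * (fact k)^2) = 4^Suc k * (fact (Suc k))^2"
  proof -
    have "(fact (Suc k)::real)^2 = (real k+1)^2 * (fact k)^2"
      by (simp add: power2_eq_square algebra_simps)
    then show ?thesis by (simp only: power_Suc) (simp add: algebra_simps)
  qed
  ultimately show ?case by (simp only: e)
qed

lemma std_normal_abs_moment_bound:
  "(\<integral>x. std_normal_density x * \<bar>x\<bar>^n \<partial>lborel) \<le> sqrt (fact n)"
proof (cases "even n")
  case True
  then obtain k where n: "n = 2*k" by (auto elim: evenE)
  have "\<bar>x\<bar>^(2*k) = x^(2*k)" for x :: real by (simp add: power_mult power2_abs)
  then have "(\<integral>x. std_normal_density x * \<bar>x\<bar>^n \<partial>lborel) = fact (2 * k) / (2^k * fact k)"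
    using integral_std_normal_moment_even[of k] n by simp
  also have "\<dots> \<le> sqrt (fact (2*k))"
  proof (rule real_le_rsqrt)
    have "(2::real)^k * 2^k = 4^k" by (simp flip: power_mult_distrib)
    then have "(fact (2 * k) / (2^k * fact k) :: real)\<^sup>2 = fact (2*k) * (fact (2*k) / (4^k * (fact k)^2))"
      by (simp add: power2_eq_square field_simps)
    also have "\<dots> \<le> fact (2*k) * 1"
      using fact_even_bound[of k] by (intro mult_left_mono) auto
    finally show "(fact (2 * k) / (2^k * fact k) :: real)\<^sup>2 \<le> fact (2*k)" by simp
  qed
  finally show ?thesis using n by simp
next
  case False
  then obtain k where n: "n = 2*k+1" by (metis oddE)
  have "(\<integral>x. std_normal_density x * \<bar>x\<bar>^n \<partial>lborel) = sqrt (2 / pi) * 2^k * fact k"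
    using integral_std_normal_moment_abs_odd[of k] n by simp
  also have "\<dots> \<le> sqrt (fact (2*k+1))"
  proof (rule real_le_rsqrt)
    have "(2::real)^k * 2^k = 4^k" by (simp flip: power_mult_distrib)
    then have "(sqrt (2 / pi) * 2^k * fact k)\<^sup>2 = (2/pi) * (4^k * (fact k)^2)"
      by (simp add: power2_eq_square power_mult_distrib field_simps)
    also have "\<dots> \<le> 1 * (4^k * (fact k)^2)"
      using pi_gt3 by (intro mult_right_mono) auto
    also have "\<dots> \<le> fact (2*k+1)" using fact_odd_bound[of k] by simp
    finally show "(sqrt (2 / pi) * 2^k * fact k)\<^sup>2 \<le> fact (2*k+1)" .
  qed
  finally show ?thesis using n by simp
qed

lemma powr_convex0:
  fixes p :: real assumes "p \<ge> 1" shows "convex_on {0..} (\<lambda>x. x powr p)"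
proof (rule convex_onI)
  fix t x y :: real assume t: "0 < t" "t < 1" and xy: "x \<in> {0..}" "y \<in> {0..}"
  show "((1 - t) *\<^sub>R x + t *\<^sub>R y) powr p \<le> (1 - t) * x powr p + t * y powr p"
  proof (cases "x = 0 \<or> y = 0")
    case True
    have u: "u powr p \<le> u" if "0 < u" "u < 1" for u :: real
      using powr_mono'[of 1 p u] that assms by simp
    show ?thesis using True
    proof
      assume "x = 0"
      then have "((1 - t) *\<^sub>R x + t *\<^sub>R y) powr p = t powr p * y powr p"
        using xy t by (simp add: powr_mult)
      also have "\<dots> \<le> t * y powr p" using u[of t] t by (intro mult_right_mono) auto
      finally show ?thesis using \<open>x=0\<close> by simp
    next
      assume "y = 0"
      then have "((1 - t) *\<^sub>R x + t *\<^sub>R y) powr p = (1-t) powr p * x powr p"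
        using xy t by (simp add: powr_mult)
      also have "\<dots> \<le> (1-t) * x powr p" using u[of "1-t"] t by (intro mult_right_mono) auto
      finally show ?thesis using \<open>y=0\<close> by simp
    qed
  next
    case False
    then have "x \<in> {0<..}" "y \<in> {0<..}" using xy by auto
    with powr_convex[OF assms] t show ?thesis
      by (simp add: convex_on_def)
  qed
qed (simp add: convex_real_interval)

lemma abs_powr_convex:
  fixes p :: real assumes "p \<ge> 1" shows "convex_on UNIV (\<lambda>x. \<bar>x\<bar> powr p)"
proof (rule convex_onI)
  fix t x y :: real assume t: "0 < t" "t < 1"
  have "\<bar>(1 - t) *\<^sub>R x + t *\<^sub>R y\<bar> powr p \<le> ((1-t) * \<bar>x\<bar> + t * \<bar>y\<bar>) powr p"
    using t assms by (intro powr_mono2) (auto simp: abs_mult intro: order_trans[OF abs_triangle_ineq])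
  also have "\<dots> \<le> (1 - t) * \<bar>x\<bar> powr p + t * \<bar>y\<bar> powr p"
  proof -
    have "\<forall>x\<in>{0..}. \<forall>y\<in>{0..}. \<forall>u\<ge>0. \<forall>v\<ge>0. u + v = 1 \<longrightarrow> (u * x + v * y) powr p \<le> u * x powr p + v * y powr p"
      using powr_convex0[OF assms] unfolding convex_on_def by simp
    from this[rule_format, of "\<bar>x\<bar>" "\<bar>y\<bar>" "1-t" t] t show ?thesis by (simp add: mult.commute)
  qed
  finally show "\<bar>(1 - t) *\<^sub>R x + t *\<^sub>R y\<bar> powr p \<le> (1 - t) * \<bar>x\<bar> powr p + t * \<bar>y\<bar> powr p" .
qed simp


lemma abs_powr_nat: "p > 0 \<Longrightarrow> \<bar>t::real\<bar> powr real p = \<bar>t\<bar>^p"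
  by (rule powr_realpow') auto

lemma abs_diff_pow_bound:
  fixes a b :: real assumes "n \<ge> 1"
  shows "\<bar>a - b\<bar>^n \<le> 2^(n-1) * (\<bar>a\<bar>^n + \<bar>b\<bar>^n)"
proof -
  have n: "n > 0" "real n \<ge> 1" using assms by auto
  have C: "\<forall>x\<in>UNIV. \<forall>y\<in>UNIV. \<forall>u\<ge>0. \<forall>v\<ge>0. u + v = 1 \<longrightarrow> \<bar>u * x + v * y\<bar> powr real n \<le> u * \<bar>x\<bar> powr real n + v * \<bar>y\<bar> powr real n"
    using abs_powr_convex[OF n(2)] unfolding convex_on_def by simp
  have H: "\<bar>(1/2) * a + (1/2) * (-b)\<bar> powr real n \<le> (1/2) * \<bar>a\<bar> powr real n + (1/2) * \<bar>-b\<bar> powr real n"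
    using C[rule_format, of a "-b" "1/2" "1/2"] by simp
  have "\<bar>(a - b)/2\<bar>^n \<le> (\<bar>a\<bar>^n + \<bar>b\<bar>^n) / 2"
  proof -
    have e: "\<bar>a/2 - b/2\<bar> = \<bar>a-b\<bar>/2" by (simp add: diff_divide_distrib[symmetric])
    have e2: "(\<bar>a-b\<bar>/2) powr real n = (\<bar>a-b\<bar>/2)^n" by (rule powr_realpow') (use n in auto)
    show ?thesis using H n by (simp add: abs_powr_nat add_divide_distrib e e2)
  qed
  then have "\<bar>a - b\<bar>^n / 2^n \<le> (\<bar>a\<bar>^n + \<bar>b\<bar>^n) / 2"
    by (simp add: power_divide)
  then have "\<bar>a - b\<bar>^n \<le> 2^n * (\<bar>a\<bar>^n + \<bar>b\<bar>^n) / 2"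
    by (simp add: field_simps)
  also have "2^n * (\<bar>a\<bar>^n + \<bar>b\<bar>^n) / 2 = 2^(n-1) * (\<bar>a\<bar>^n + \<bar>b\<bar>^n)"
    using n by (cases n) auto
  finally show ?thesis .
qed

lemma prod_bound_pointwise:
  fixes y a :: "nat \<Rightarrow> real" and b c :: real and k :: nat and i n :: "nat \<Rightarrow> nat"
  assumes c: "c > 0" and k: "k \<ge> 1"
    and pos: "\<And>j. j < k \<Longrightarrow> i j > 0 \<and> n j > 0"
    and y: "\<And>j. j < k \<Longrightarrow> 0 \<le> y j \<and> y j \<le> c^(i j) * a j"
    and a: "\<And>j. j < k \<Longrightarrow> 0 \<le> a j"
    and ab: "\<And>j. j < k \<Longrightarrow> a j powr (real (\<Sum>j<k. i j * n j) / real (i j)) \<le> b"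
  shows "(\<Prod>j<k. y j ^ n j) \<le> c ^ (\<Sum>j<k. i j * n j) * b"
proof -
  define nn where "nn = (\<Sum>j<k. i j * n j)"
  have le: "i j * n j \<le> nn" if "j < k" for j
    unfolding nn_def using that by (intro member_le_sum) auto
  have k0: "0 < k" using k by simp
  have "0 < i 0 * n 0" using pos[OF k0] by simp
  then have nnpos: "nn > 0" using le[OF k0] by linarith
  have "0 \<le> a 0 powr (real nn / real (i 0))" by simp
  then have b0: "b \<ge> 0" using ab[OF k0] unfolding nn_def by linarith
  have step: "y j ^ n j \<le> c^(i j * n j) * b powr (real (i j * n j) / real nn)" if j: "j < k" for j
  proof -
    have ij: "i j > 0" "n j > 0" using pos[OF j] by auto
    have "y j ^ n j \<le> (c^(i j) * a j) ^ n j" using y[OF j] by (intro power_mono) auto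
    also have "\<dots> = c^(i j * n j) * a j ^ n j" by (simp add: power_mult_distrib power_mult)
    also have "a j ^ n j \<le> b powr (real (i j * n j) / real nn)"
    proof (cases "a j = 0")
      case True then show ?thesis using ij by (simp add: zero_power)
    next
      case False
      then have ap: "a j > 0" using a[OF j] by simp
      have "(a j powr (real nn / real (i j))) powr (real (i j * n j) / real nn)
            = a j powr (real nn / real (i j) * (real (i j * n j) / real nn))"
        by (rule powr_powr)
      also have "real nn / real (i j) * (real (i j * n j) / real nn) = real (n j)"
        using ij nnpos by (simp add: field_simps)
      also have "a j powr real (n j) = a j ^ n j" using ap by (rule powr_realpow)
      finally have "a j ^ n j = (a j powr (real nn / real (i j))) powr (real (i j * n j) / real nn)" by simp
      also have "\<dots> \<le> b powr (real (i j * n j) / real nn)"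
        using ab[OF j] unfolding nn_def[symmetric] by (intro powr_mono2) auto
      finally show ?thesis .
    qed
    then have "c^(i j * n j) * a j ^ n j \<le> c^(i j * n j) * b powr (real (i j * n j) / real nn)"
      using c by (intro mult_left_mono) auto
    finally show ?thesis .
  qed
  have "(\<Prod>j<k. y j ^ n j) \<le> (\<Prod>j<k. c^(i j * n j) * b powr (real (i j * n j) / real nn))"
    using step y by (intro prod_mono) auto
  also have "\<dots> = (\<Prod>j<k. c^(i j * n j)) * (\<Prod>j<k. b powr (real (i j * n j) / real nn))"
    by (rule prod.distrib)
  also have "(\<Prod>j<k. c^(i j * n j)) = c ^ nn"
    unfolding nn_def by (rule power_sum[symmetric])
  also have "(\<Prod>j<k. b powr (real (i j * n j) / real nn)) = b"
  proof (cases "b = 0")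
    case True
    have "0 \<in> {..<k}" using k0 by simp
    then show ?thesis using True by simp
  next
    case False
    have "(\<Prod>j<k. b powr (real (i j * n j) / real nn)) = b powr (\<Sum>j<k. real (i j * n j) / real nn)"
      using False by (rule powr_sum[symmetric])
    also have "(\<Sum>j<k. real (i j * n j) / real nn) = (\<Sum>j<k. real (i j * n j)) / real nn"
      by (rule sum_divide_distrib[symmetric])
    also have "(\<Sum>j<k. real (i j * n j)) = real nn"
      unfolding nn_def by (rule of_nat_sum[symmetric])
    also have "real nn / real nn = 1" using nnpos by simp
    finally show ?thesis using b0 False by simp
  qed
  finally show ?thesis unfolding nn_def .
qed

theorem mainTheorem19:
  fixes M :: "'a measure" and X N Y :: "'a \<Rightarrow> real" and snr :: real
    and k :: nat and i n :: "nat \<Rightarrow> nat"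
  assumes "prob_space M"
    and "X \<in> borel_measurable M"
    and "distributed M lborel N std_normal_density"
    and "prob_space.indep_var M borel X borel N"
    and "snr > 0"
    and "\<And>\<omega>. Y \<omega> = sqrt snr * X \<omega> + N \<omega>"
    and "k \<ge> 1"
    and "\<And>j. j < k \<Longrightarrow> i j > 0"
    and "\<And>j. j < k \<Longrightarrow> n j > 0"
  shows "(\<integral>\<^sup>+ \<omega>. ennreal (\<Prod>j<k. \<bar>cond_moment M X Y (i j) \<omega>\<bar> ^ n j) \<partial>M)
           \<le> ennreal (snr powr (- real (\<Sum>j<k. i j * n j) / 2) * 2 ^ (\<Sum>j<k. i j * n j)
                      * sqrt (fact (\<Sum>j<k. i j * n j)))"
proof -
  interpret P: prob_space M by fact
  note dist = assms(3)
  have [measurable]: "N \<in> borel_measurable M" using distributed_measurable[OF dist] by simp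
  have [measurable]: "X \<in> borel_measurable M" by fact
  note Ydef = assms(6)
  have Yeq: "Y = (\<lambda>\<omega>. sqrt snr * X \<omega> + N \<omega>)" using Ydef by auto
  have [measurable]: "Y \<in> borel_measurable M" unfolding Yeq by measurable
  define F where "F = gen_sigma M Y"
  have spF: "space F = space M" unfolding F_def gen_sigma_def by simp
  have YF[measurable]: "Y \<in> borel_measurable F" unfolding F_def gen_sigma_def
    by (rule measurable_vimage_algebra1) simp
  have subalg: "subalgebra M F"
    unfolding subalgebra_def
  proof
    show "sets F \<subseteq> sets M"
      unfolding F_def gen_sigma_def
      by (subst sets_vimage_algebra2) (auto simp: measurable_sets)
  qed (rule spF)
  interpret S: finite_measure_subalgebra M F by unfold_locales (rule subalg)
  define c where "c = snr powr (-1/2)"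
  have c_pos: "c > 0" unfolding c_def using assms(5) by simp
  have sc: "sqrt snr * c = 1"
    using assms(5) by (simp add: c_def powr_minus_divide powr_half_sqrt[symmetric] powr_minus field_simps)
  define G where "G = (\<lambda>\<omega>. Y \<omega> / sqrt snr)"
  have GF[measurable]: "G \<in> borel_measurable F" unfolding G_def by measurable
  have XG: "X \<omega> = G \<omega> - c * N \<omega>" for \<omega>
  proof -
    have "sqrt snr > 0" using assms(5) by simp
    then show ?thesis unfolding G_def Ydef using sc by (simp add: field_simps)
  qed
  define E where "E = real_cond_exp M F"
  have E_meas[measurable]: "E f \<in> borel_measurable M" for f unfolding E_def by simp
  have N_int: "integrable M N"
    using distributed_integrable[OF dist, of "\<lambda>x. x"] integrable_std_normal_moment[of 1] by simp
  define R where "R = E N"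
  have Rmeas[measurable]: "R \<in> borel_measurable M" "R \<in> borel_measurable F"
    unfolding R_def E_def by simp_all
  have EX: "AE \<omega> in M. E X \<omega> = G \<omega> - c * R \<omega>"
  proof -
    define A where "A m = {\<omega> \<in> space M. \<bar>G \<omega>\<bar> \<le> real m}" for m :: nat
    have AF[measurable]: "A m \<in> sets F" for m
    proof -
      have "{\<omega> \<in> space F. \<bar>G \<omega>\<bar> \<le> real m} \<in> sets F" by measurable
      then show ?thesis unfolding A_def spF .
    qed
    have AM[measurable]: "A m \<in> sets M" for m using AF subalg unfolding subalgebra_def by auto
    have "AE \<omega> in M. indicator (A m) \<omega> * E X \<omega> = indicator (A m) \<omega> * (G \<omega> - c * R \<omega>)" for m
    proof -
      let ?i = "\<lambda>\<omega>. indicator (A m) \<omega> :: real"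
      have iG: "integrable M (\<lambda>\<omega>. ?i \<omega> * G \<omega>)"
      proof (rule Bochner_Integration.integrable_bound[of _ "\<lambda>_. real m"])
        have [measurable]: "G \<in> borel_measurable M" using measurable_from_subalg[OF subalg GF] .
        show "(\<lambda>\<omega>. ?i \<omega> * G \<omega>) \<in> borel_measurable M" by measurable
      qed (auto simp: A_def indicator_def intro!: AE_I2)
      have iN: "integrable M (\<lambda>\<omega>. ?i \<omega> * N \<omega>)"
        using integrable_mult_indicator[OF AM N_int] by simp
      have eq: "(\<lambda>\<omega>. ?i \<omega> * X \<omega>) = (\<lambda>\<omega>. ?i \<omega> * G \<omega> - c * (?i \<omega> * N \<omega>))"
        by (auto simp: XG algebra_simps)
      have iX: "integrable M (\<lambda>\<omega>. ?i \<omega> * X \<omega>)" unfolding eq using iG iN by simp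
      have 1: "AE \<omega> in M. E (\<lambda>\<omega>. ?i \<omega> * X \<omega>) \<omega> = ?i \<omega> * E X \<omega>"
        unfolding E_def by (rule S.real_cond_exp_mult) (use iX in auto)
      have 2: "AE \<omega> in M. E (\<lambda>\<omega>. ?i \<omega> * G \<omega> - c * (?i \<omega> * N \<omega>)) \<omega>
                 = E (\<lambda>\<omega>. ?i \<omega> * G \<omega>) \<omega> - E (\<lambda>\<omega>. c * (?i \<omega> * N \<omega>)) \<omega>"
        unfolding E_def by (rule S.real_cond_exp_diff) (use iG iN in auto)
      have 3: "AE \<omega> in M. E (\<lambda>\<omega>. ?i \<omega> * G \<omega>) \<omega> = ?i \<omega> * G \<omega>"
        unfolding E_def by (rule S.real_cond_exp_F_meas) (use iG in auto)
      have 4: "AE \<omega> in M. E (\<lambda>\<omega>. c * (?i \<omega> * N \<omega>)) \<omega> = c * E (\<lambda>\<omega>. ?i \<omega> * N \<omega>) \<omega>"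
        unfolding E_def by (rule S.real_cond_exp_cmult) (use iN in auto)
      have 5: "AE \<omega> in M. E (\<lambda>\<omega>. ?i \<omega> * N \<omega>) \<omega> = ?i \<omega> * R \<omega>"
        unfolding E_def R_def by (rule S.real_cond_exp_mult) (use iN in auto)
      show ?thesis using 1 2 3 4 5 unfolding eq by eventually_elim (auto simp: algebra_simps)
    qed
    then have "AE \<omega> in M. \<forall>m. indicator (A m) \<omega> * E X \<omega> = indicator (A m) \<omega> * (G \<omega> - c * R \<omega>)"
      by (subst AE_all_countable) blast
    then show ?thesis
    proof (rule AE_mp[OF _ AE_I2], intro impI)
      fix \<omega> assume \<omega>: "\<omega> \<in> space M"
        and H: "\<forall>m. indicator (A m) \<omega> * E X \<omega> = indicator (A m) \<omega> * (G \<omega> - c * R \<omega>)"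
      obtain m :: nat where "\<bar>G \<omega>\<bar> \<le> real m" using real_arch_simple by blast
      then have "\<omega> \<in> A m" using \<omega> unfolding A_def by auto
      with H[rule_format, of m] show "E X \<omega> = G \<omega> - c * R \<omega>" by simp
    qed
  qed
  define V where "V \<omega> = N \<omega> - R \<omega>" for \<omega>
  have Vmeas[measurable]: "V \<in> borel_measurable M" unfolding V_def by measurable
  have Nmom_int: "integrable M (\<lambda>\<omega>. \<bar>N \<omega>\<bar>^p)" for p
    using distributed_integrable[OF dist, of "\<lambda>x. \<bar>x\<bar>^p"] integrable_std_normal_moment_abs[of p] by simp
  have Nmom: "(\<integral>\<omega>. \<bar>N \<omega>\<bar>^p \<partial>M) \<le> sqrt (fact p)" for p
    using distributed_integral[OF dist, of "\<lambda>x. \<bar>x\<bar>^p"] std_normal_abs_moment_bound[of p] by simp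
  have JR: "(AE \<omega> in M. \<bar>R \<omega>\<bar>^p \<le> E (\<lambda>\<omega>. \<bar>N \<omega>\<bar>^p) \<omega>) \<and> integrable M (\<lambda>\<omega>. \<bar>R \<omega>\<bar>^p)"
    if p: "p > 0" for p
  proof -
    have pp: "real p \<ge> 1" using p by simp
    have q: "integrable M (\<lambda>\<omega>. \<bar>N \<omega>\<bar> powr real p)" using Nmom_int[of p] p by (simp add: abs_powr_nat)
    have "AE \<omega> in M. \<bar>E N \<omega>\<bar> powr real p \<le> E (\<lambda>\<omega>. \<bar>N \<omega>\<bar> powr real p) \<omega>"
      unfolding E_def
      by (rule S.real_cond_exp_jensens_inequality(2)[OF N_int, of UNIV, OF _ _ q abs_powr_convex[OF pp]]) auto
    moreover have "integrable M (\<lambda>\<omega>. \<bar>E N \<omega>\<bar> powr real p)"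
      unfolding E_def
      by (rule S.integrable_convex_cond_exp[OF N_int, of UNIV, OF _ _ q abs_powr_convex[OF pp]]) auto
    ultimately show ?thesis using p by (simp add: abs_powr_nat R_def)
  qed
  have Rmom_int: "integrable M (\<lambda>\<omega>. \<bar>R \<omega>\<bar>^p)" for p
    using JR[of p] by (cases "p = 0") auto
  have Rmom: "(\<integral>\<omega>. \<bar>R \<omega>\<bar>^p \<partial>M) \<le> (\<integral>\<omega>. \<bar>N \<omega>\<bar>^p \<partial>M)" if p: "p > 0" for p
  proof -
    have "(\<integral>\<omega>. \<bar>R \<omega>\<bar>^p \<partial>M) \<le> (\<integral>\<omega>. E (\<lambda>\<omega>. \<bar>N \<omega>\<bar>^p) \<omega> \<partial>M)"
      using JR[OF p] S.real_cond_exp_int(1)[OF Nmom_int[of p]] unfolding E_def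
      by (intro integral_mono_AE) auto
    also have "\<dots> = (\<integral>\<omega>. \<bar>N \<omega>\<bar>^p \<partial>M)"
      unfolding E_def by (rule S.real_cond_exp_int(2)[OF Nmom_int[of p]])
    finally show ?thesis .
  qed
  have Vbound: "\<bar>V \<omega>\<bar>^p \<le> 2^(p-1) * (\<bar>N \<omega>\<bar>^p + \<bar>R \<omega>\<bar>^p)" if "p > 0" for p \<omega>
    unfolding V_def using abs_diff_pow_bound[of p] that by simp
  have Vmom_int: "integrable M (\<lambda>\<omega>. \<bar>V \<omega>\<bar>^p)" for p
  proof (cases "p = 0")
    case False
    show ?thesis
    proof (rule Bochner_Integration.integrable_bound[of _ "\<lambda>\<omega>. 2^(p-1) * (\<bar>N \<omega>\<bar>^p + \<bar>R \<omega>\<bar>^p)"])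
      show "integrable M (\<lambda>\<omega>. 2^(p-1) * (\<bar>N \<omega>\<bar>^p + \<bar>R \<omega>\<bar>^p))"
        using Nmom_int[of p] Rmom_int[of p] by auto
      show "AE \<omega> in M. norm (\<bar>V \<omega>\<bar>^p) \<le> norm (2^(p-1) * (\<bar>N \<omega>\<bar>^p + \<bar>R \<omega>\<bar>^p) :: real)"
        using Vbound[of p] False by (intro AE_I2) (auto intro: order_trans[OF _ abs_ge_self])
    qed measurable
  qed simp
  have Vpow_int: "integrable M (\<lambda>\<omega>. V \<omega>^p)" for p
    by (rule Bochner_Integration.integrable_bound[OF Vmom_int[of p]]) (auto simp: power_abs)
  have Vmom: "(\<integral>\<omega>. \<bar>V \<omega>\<bar>^p \<partial>M) \<le> 2^p * sqrt (fact p)" if p: "p > 0" for p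
  proof -
    have "(\<integral>\<omega>. \<bar>V \<omega>\<bar>^p \<partial>M) \<le> (\<integral>\<omega>. 2^(p-1) * (\<bar>N \<omega>\<bar>^p + \<bar>R \<omega>\<bar>^p) \<partial>M)"
      using Vbound[OF p] Vmom_int[of p] Nmom_int[of p] Rmom_int[of p] by (intro integral_mono) auto
    also have "\<dots> = 2^(p-1) * ((\<integral>\<omega>. \<bar>N \<omega>\<bar>^p \<partial>M) + (\<integral>\<omega>. \<bar>R \<omega>\<bar>^p \<partial>M))"
      using Nmom_int[of p] Rmom_int[of p] by simp
    also have "\<dots> \<le> 2^(p-1) * (2 * sqrt (fact p))"
      using Rmom[OF p] Nmom[of p] by (intro mult_left_mono) auto
    also have "\<dots> = 2^p * sqrt (fact p)" using p by (cases p) auto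
    finally show ?thesis .
  qed
  have CM: "AE \<omega> in M. cond_moment M X Y p \<omega> = (-c)^p * E (\<lambda>\<omega>. V \<omega>^p) \<omega>" for p
  proof -
    have cm: "cond_moment M X Y p = E (\<lambda>\<omega>. (X \<omega> - E X \<omega>)^p)"
      unfolding cond_moment_def E_def F_def ..
    have "AE \<omega> in M. (X \<omega> - E X \<omega>)^p = (-c)^p * V \<omega>^p"
      using EX
    proof eventually_elim
      case (elim \<omega>)
      then have "X \<omega> - E X \<omega> = -c * V \<omega>" by (simp add: XG V_def algebra_simps)
      then show ?case by (simp only: power_mult_distrib[symmetric])
    qed
    then have "AE \<omega> in M. E (\<lambda>\<omega>. (X \<omega> - E X \<omega>)^p) \<omega> = E (\<lambda>\<omega>. (-c)^p * V \<omega>^p) \<omega>"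
      unfolding E_def by (rule S.real_cond_exp_cong) (auto simp: E_def[symmetric])
    moreover have "AE \<omega> in M. E (\<lambda>\<omega>. (-c)^p * V \<omega>^p) \<omega> = (-c)^p * E (\<lambda>\<omega>. V \<omega>^p) \<omega>"
      unfolding E_def by (rule S.real_cond_exp_cmult[OF Vpow_int])
    ultimately show ?thesis unfolding cm by eventually_elim simp
  qed
  have absE: "AE \<omega> in M. \<bar>E (\<lambda>\<omega>. V \<omega>^p) \<omega>\<bar> \<le> E (\<lambda>\<omega>. \<bar>V \<omega>\<bar>^p) \<omega>" for p
  proof -
    have 1: "AE \<omega> in M. E (\<lambda>\<omega>. V \<omega>^p) \<omega> \<le> E (\<lambda>\<omega>. \<bar>V \<omega>\<bar>^p) \<omega>"
      unfolding E_def
    proof (rule S.real_cond_exp_mono[OF _ Vpow_int Vmom_int], rule AE_I2)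
      fix \<omega> show "V \<omega> ^ p \<le> \<bar>V \<omega>\<bar> ^ p" using abs_ge_self[of "V \<omega> ^ p"] by (simp add: power_abs)
    qed
    have "AE \<omega> in M. E (\<lambda>\<omega>. -1 * \<bar>V \<omega>\<bar>^p) \<omega> \<le> E (\<lambda>\<omega>. V \<omega>^p) \<omega>"
      unfolding E_def
    proof (rule S.real_cond_exp_mono[OF _ _ Vpow_int])
      show "integrable M (\<lambda>\<omega>. -1 * \<bar>V \<omega>\<bar>^p)" using Vmom_int[of p] by simp
      show "AE \<omega> in M. -1 * \<bar>V \<omega>\<bar>^p \<le> V \<omega>^p"
      proof (rule AE_I2)
        fix \<omega> show "-1 * \<bar>V \<omega>\<bar> ^ p \<le> V \<omega> ^ p" using abs_ge_minus_self[of "V \<omega> ^ p"] by (simp add: power_abs)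
      qed
    qed
    moreover have "AE \<omega> in M. E (\<lambda>\<omega>. -1 * \<bar>V \<omega>\<bar>^p) \<omega> = -1 * E (\<lambda>\<omega>. \<bar>V \<omega>\<bar>^p) \<omega>"
      unfolding E_def by (rule S.real_cond_exp_cmult[OF Vmom_int])
    ultimately show ?thesis using 1 by eventually_elim auto
  qed
  have Epos: "AE \<omega> in M. E (\<lambda>\<omega>. \<bar>V \<omega>\<bar>^p) \<omega> \<ge> 0" for p
    unfolding E_def by (rule S.real_cond_exp_pos) auto
  define nn where "nn = (\<Sum>j<k. i j * n j)"
  have nn_ge: "i j \<le> nn" if "j < k" for j
  proof -
    have "i j \<le> i j * n j" using assms(9)[OF that] by simp
    also have "\<dots> \<le> nn" unfolding nn_def using that by (intro member_le_sum) auto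
    finally show ?thesis .
  qed
  have k0: "0 < k" using assms(7) by simp
  have nnpos: "nn > 0" using nn_ge[OF k0] assms(8)[OF k0] by linarith
  have Jen: "AE \<omega> in M. E (\<lambda>\<omega>. \<bar>V \<omega>\<bar>^p) \<omega> powr (real nn / real p) \<le> E (\<lambda>\<omega>. \<bar>V \<omega>\<bar>^nn) \<omega>"
    if p: "0 < p" "p \<le> nn" for p
  proof -
    have pp: "real nn / real p \<ge> 1" using p by simp
    have qeq: "(\<lambda>\<omega>. \<bar>\<bar>V \<omega>\<bar>^p\<bar> powr (real nn / real p)) = (\<lambda>\<omega>. \<bar>V \<omega>\<bar>^nn)"
    proof
      fix \<omega>
      show "\<bar>\<bar>V \<omega>\<bar>^p\<bar> powr (real nn / real p) = \<bar>V \<omega>\<bar>^nn"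
      proof (cases "V \<omega> = 0")
        case True then show ?thesis using p nnpos by (simp add: zero_power)
      next
        case False
        then have "\<bar>\<bar>V \<omega>\<bar>^p\<bar> powr (real nn / real p) = (\<bar>V \<omega>\<bar> powr real p) powr (real nn / real p)"
          by (simp add: powr_realpow)
        also have "\<dots> = \<bar>V \<omega>\<bar> powr real nn" using p by (simp add: powr_powr)
        also have "\<dots> = \<bar>V \<omega>\<bar>^nn" using False by (simp add: powr_realpow)
        finally show ?thesis .
      qed
    qed
    have q: "integrable M (\<lambda>\<omega>. \<bar>\<bar>V \<omega>\<bar>^p\<bar> powr (real nn / real p))" unfolding qeq by (rule Vmom_int)
    have "AE \<omega> in M. \<bar>E (\<lambda>\<omega>. \<bar>V \<omega>\<bar>^p) \<omega>\<bar> powr (real nn / real p) \<le> E (\<lambda>\<omega>. \<bar>\<bar>V \<omega>\<bar>^p\<bar> powr (real nn / real p)) \<omega>"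
      unfolding E_def
      by (rule S.real_cond_exp_jensens_inequality(2)[OF Vmom_int[of p], of UNIV, OF _ _ q abs_powr_convex[OF pp]]) auto
    then show ?thesis using Epos[of p] unfolding qeq by eventually_elim auto
  qed
  have AEall: "AE \<omega> in M. \<forall>j\<in>{..<k}. cond_moment M X Y (i j) \<omega> = (-c)^(i j) * E (\<lambda>\<omega>. V \<omega>^(i j)) \<omega>
       \<and> \<bar>E (\<lambda>\<omega>. V \<omega>^(i j)) \<omega>\<bar> \<le> E (\<lambda>\<omega>. \<bar>V \<omega>\<bar>^(i j)) \<omega>
       \<and> E (\<lambda>\<omega>. \<bar>V \<omega>\<bar>^(i j)) \<omega> \<ge> 0
       \<and> E (\<lambda>\<omega>. \<bar>V \<omega>\<bar>^(i j)) \<omega> powr (real nn / real (i j)) \<le> E (\<lambda>\<omega>. \<bar>V \<omega>\<bar>^nn) \<omega>"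
  proof (subst AE_finite_all)
    show "\<forall>j\<in>{..<k}. AE \<omega> in M. cond_moment M X Y (i j) \<omega> = (-c)^(i j) * E (\<lambda>\<omega>. V \<omega>^(i j)) \<omega>
       \<and> \<bar>E (\<lambda>\<omega>. V \<omega>^(i j)) \<omega>\<bar> \<le> E (\<lambda>\<omega>. \<bar>V \<omega>\<bar>^(i j)) \<omega>
       \<and> E (\<lambda>\<omega>. \<bar>V \<omega>\<bar>^(i j)) \<omega> \<ge> 0
       \<and> E (\<lambda>\<omega>. \<bar>V \<omega>\<bar>^(i j)) \<omega> powr (real nn / real (i j)) \<le> E (\<lambda>\<omega>. \<bar>V \<omega>\<bar>^nn) \<omega>"
    proof
      fix j assume "j \<in> {..<k}"
      then have j: "j < k" by simp
      show "AE \<omega> in M. cond_moment M X Y (i j) \<omega> = (-c)^(i j) * E (\<lambda>\<omega>. V \<omega>^(i j)) \<omega>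
       \<and> \<bar>E (\<lambda>\<omega>. V \<omega>^(i j)) \<omega>\<bar> \<le> E (\<lambda>\<omega>. \<bar>V \<omega>\<bar>^(i j)) \<omega>
       \<and> E (\<lambda>\<omega>. \<bar>V \<omega>\<bar>^(i j)) \<omega> \<ge> 0
       \<and> E (\<lambda>\<omega>. \<bar>V \<omega>\<bar>^(i j)) \<omega> powr (real nn / real (i j)) \<le> E (\<lambda>\<omega>. \<bar>V \<omega>\<bar>^nn) \<omega>"
        using CM[of "i j"] absE[of "i j"] Epos[of "i j"] Jen[OF assms(8)[OF j] nn_ge[OF j]]
        by eventually_elim auto
    qed
  qed simp
  have AEb: "AE \<omega> in M. (\<Prod>j<k. \<bar>cond_moment M X Y (i j) \<omega>\<bar> ^ n j) \<le> c^nn * E (\<lambda>\<omega>. \<bar>V \<omega>\<bar>^nn) \<omega>"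
    using AEall
  proof eventually_elim
    case (elim \<omega>)
    show ?case unfolding nn_def
    proof (rule prod_bound_pointwise[OF c_pos assms(7)])
      show "\<And>j. j < k \<Longrightarrow> 0 < i j \<and> 0 < n j" using assms(8,9) by auto
      fix j assume j: "j < k"
      with elim have e: "cond_moment M X Y (i j) \<omega> = (-c)^(i j) * E (\<lambda>\<omega>. V \<omega>^(i j)) \<omega>"
        "\<bar>E (\<lambda>\<omega>. V \<omega>^(i j)) \<omega>\<bar> \<le> E (\<lambda>\<omega>. \<bar>V \<omega>\<bar>^(i j)) \<omega>"
        "E (\<lambda>\<omega>. \<bar>V \<omega>\<bar>^(i j)) \<omega> \<ge> 0"
        "E (\<lambda>\<omega>. \<bar>V \<omega>\<bar>^(i j)) \<omega> powr (real nn / real (i j)) \<le> E (\<lambda>\<omega>. \<bar>V \<omega>\<bar>^nn) \<omega>"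
        by auto
      have "\<bar>cond_moment M X Y (i j) \<omega>\<bar> = c^(i j) * \<bar>E (\<lambda>\<omega>. V \<omega>^(i j)) \<omega>\<bar>"
        using e(1) c_pos by (simp add: abs_mult power_abs)
      also have "\<dots> \<le> c^(i j) * E (\<lambda>\<omega>. \<bar>V \<omega>\<bar>^(i j)) \<omega>"
        using e(2) c_pos by (intro mult_left_mono) auto
      finally show "0 \<le> \<bar>cond_moment M X Y (i j) \<omega>\<bar> \<and> \<bar>cond_moment M X Y (i j) \<omega>\<bar> \<le> c^(i j) * E (\<lambda>\<omega>. \<bar>V \<omega>\<bar>^(i j)) \<omega>"
        by simp
      show "0 \<le> E (\<lambda>\<omega>. \<bar>V \<omega>\<bar>^(i j)) \<omega>" by (rule e(3))
      show "E (\<lambda>\<omega>. \<bar>V \<omega>\<bar>^(i j)) \<omega> powr (real (\<Sum>j<k. i j * n j) / real (i j)) \<le> E (\<lambda>\<omega>. \<bar>V \<omega>\<bar>^(\<Sum>j<k. i j * n j)) \<omega>"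
        using e(4) unfolding nn_def .
    qed
  qed
  have Eint: "integrable M (E (\<lambda>\<omega>. \<bar>V \<omega>\<bar>^nn))"
    unfolding E_def by (rule S.real_cond_exp_int(1)[OF Vmom_int])
  have "(\<integral>\<^sup>+ \<omega>. ennreal (\<Prod>j<k. \<bar>cond_moment M X Y (i j) \<omega>\<bar> ^ n j) \<partial>M)
        \<le> (\<integral>\<^sup>+ \<omega>. ennreal (c^nn * E (\<lambda>\<omega>. \<bar>V \<omega>\<bar>^nn) \<omega>) \<partial>M)"
    using AEb by (intro nn_integral_mono_AE) (auto elim!: eventually_mono intro: ennreal_leI)
  also have "\<dots> = ennreal (\<integral>\<omega>. c^nn * E (\<lambda>\<omega>. \<bar>V \<omega>\<bar>^nn) \<omega> \<partial>M)"
    using Epos[of nn] Eint c_pos by (intro nn_integral_eq_integral) auto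
  also have "(\<integral>\<omega>. c^nn * E (\<lambda>\<omega>. \<bar>V \<omega>\<bar>^nn) \<omega> \<partial>M) = c^nn * (\<integral>\<omega>. \<bar>V \<omega>\<bar>^nn \<partial>M)"
    using S.real_cond_exp_int(2)[OF Vmom_int[of nn]] unfolding E_def by simp
  also have "\<dots> \<le> c^nn * (2^nn * sqrt (fact nn))"
    using Vmom[OF nnpos] c_pos by (intro mult_left_mono) auto
  also have "c^nn = snr powr (- real nn / 2)"
    unfolding c_def using assms(5) by (simp add: powr_power)
  finally show ?thesis unfolding nn_def by (simp add: ennreal_leI mult.assoc)
qed

end
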